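(* For every $\mathsf{UCQ}^{\neq}$ $\tilde q$ (a Boolean union of conjunctive queries possibly containing inequality atoms $x\neq y$) and every $k\in\mathbb{N}$, there exists a finite set $\mathcal{Q}^{\neq}$ of $\mathsf{CQ}^{\neq}$ queries, together with rational numbers $\gamma_q$ ($q\in\mathcal{Q}^{\neq}$) computable from $q$ (one may take $\gamma_q=1/|\mathrm{Aut}(q)|$, where $\mathrm{Aut}(q)$ is the set of homomorphisms from $q$ to itself), such that for every database $\mathcal{D}$: $$\#\mathrm{FMS}_{\tilde q}(k,\mathcal{D})=\sum_{q\in\mathcal{Q}^{\neq}}\#\mathrm{Hom}_q(\mathcal{D})\cdot\gamma_q,$$ where $\#\mathrm{Hom}_q(\mathcal{D})$ is the number of homomorphisms from $q$ to $\mathcal{D}$. Moreover, every $q\in\mathcal{Q}^{\neq}$ has size at most quadratic in the size of $\tilde q$.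
   Context: A database is a finite set of facts $P(\vec a)$ over constants. A homomorphism from a $\mathsf{CQ}^{\neq}$ $q$ (a conjunction of relational atoms and inequality atoms over variables and constants, all variables existentially quantified) to $\mathcal{D}$ is a map $h$ from the terms of $q$ to constants, the identity on constants, such that $P(h(\vec x))\in\mathcal{D}$ for every relational atom $P(\vec x)$ of $q$ and $h(x)\neq h(y)$ for every inequality atom $x\neq y$; homomorphisms between queries are defined analogously. $\mathcal{D}\models\tilde q$ if some disjunct of $\tilde q$ has a homomorphism to $\mathcal{D}$. A minimal support of $\tilde q$ in $\mathcal{D}$ is an inclusion-minimal $S\subseteq\mathcal{D}$ with $S\models\tilde q$; $\#\mathrm{FMS}_{\tilde q}(k,\mathcal{D})$ is the number of minimal supports of $\tilde q$ in $\mathcal{D}$ of cardinality exactly $k$. *)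

theory Defs
  imports Complex_Main
begin

datatype ('v, 'c) trm = Var 'v | Const 'c

text \<open>A CQ with inequalities: a list of relational atoms (relation name, argument terms)
  and a list of inequality atoms (s, t) meaning s \<noteq> t. All variables are existentially
  quantified (Boolean query).\<close>
type_synonym ('r, 'v, 'c) cqneq =
  "('r \<times> ('v, 'c) trm list) list \<times> (('v, 'c) trm \<times> ('v, 'c) trm) list"

type_synonym ('r, 'v, 'c) ucqneq = "('r, 'v, 'c) cqneq list"

type_synonym ('r, 'c) database = "('r \<times> 'c list) set"

fun trm_vars :: "('v, 'c) trm \<Rightarrow> 'v set" where
  "trm_vars (Var x) = {x}"
| "trm_vars (Const c) = {}"

definition rel_vars :: "('r, 'v, 'c) cqneq \<Rightarrow> 'v set" where
  "rel_vars q = (\<Union>(P, ts) \<in> set (fst q). \<Union>t \<in> set ts. trm_vars t)"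

definition cq_vars :: "('r, 'v, 'c) cqneq \<Rightarrow> 'v set" where
  "cq_vars q = rel_vars q \<union> (\<Union>(s, t) \<in> set (snd q). trm_vars s \<union> trm_vars t)"

definition safe_cq :: "('r, 'v, 'c) cqneq \<Rightarrow> bool" where
  "safe_cq q \<longleftrightarrow> cq_vars q \<subseteq> rel_vars q"

fun eval_trm :: "('v \<Rightarrow> 'c) \<Rightarrow> ('v, 'c) trm \<Rightarrow> 'c" where
  "eval_trm h (Var x) = h x"
| "eval_trm h (Const c) = c"

definition is_hom :: "('r, 'v, 'c) cqneq \<Rightarrow> ('r, 'c) database \<Rightarrow> ('v \<Rightarrow> 'c) \<Rightarrow> bool" where
  "is_hom q D h \<longleftrightarrow>
     (\<forall>(P, ts) \<in> set (fst q). (P, map (eval_trm h) ts) \<in> D) \<and>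
     (\<forall>(s, t) \<in> set (snd q). eval_trm h s \<noteq> eval_trm h t)"

text \<open>The set of homomorphisms from q to D, as maps on the variables of q
  (identity on constants; canonical value outside the variables of q).\<close>
definition Hom :: "('r, 'v, 'c) cqneq \<Rightarrow> ('r, 'c) database \<Rightarrow> ('v \<Rightarrow> 'c) set" where
  "Hom q D = {h. is_hom q D h \<and> (\<forall>x. x \<notin> cq_vars q \<longrightarrow> h x = undefined)}"

definition count_hom :: "('r, 'v, 'c) cqneq \<Rightarrow> ('r, 'c) database \<Rightarrow> nat" where
  "count_hom q D = card (Hom q D)"

fun subst_trm :: "('v \<Rightarrow> ('w, 'c) trm) \<Rightarrow> ('v, 'c) trm \<Rightarrow> ('w, 'c) trm" where
  "subst_trm g (Var x) = g x"
| "subst_trm g (Const c) = Const c"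

definition is_qhom ::
  "('r, 'v, 'c) cqneq \<Rightarrow> ('r, 'w, 'c) cqneq \<Rightarrow> ('v \<Rightarrow> ('w, 'c) trm) \<Rightarrow> bool" where
  "is_qhom q q' g \<longleftrightarrow>
     (\<forall>(P, ts) \<in> set (fst q). (P, map (subst_trm g) ts) \<in> set (fst q')) \<and>
     (\<forall>(s, t) \<in> set (snd q). subst_trm g s \<noteq> subst_trm g t)"

definition Aut :: "('r, 'v, 'c) cqneq \<Rightarrow> ('v \<Rightarrow> ('v, 'c) trm) set" where
  "Aut q = {g. is_qhom q q g \<and> (\<forall>x. x \<notin> cq_vars q \<longrightarrow> g x = Var x)}"

definition models :: "('r, 'c) database \<Rightarrow> ('r, 'v, 'c) ucqneq \<Rightarrow> bool" where
  "models D u \<longleftrightarrow> (\<exists>q \<in> set u. \<exists>h. is_hom q D h)"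

definition min_support :: "('r, 'v, 'c) ucqneq \<Rightarrow> ('r, 'c) database \<Rightarrow> ('r, 'c) database \<Rightarrow> bool" where
  "min_support u D S \<longleftrightarrow> S \<subseteq> D \<and> models S u \<and> (\<forall>S'. S' \<subset> S \<longrightarrow> \<not> models S' u)"

definition count_FMS :: "('r, 'v, 'c) ucqneq \<Rightarrow> nat \<Rightarrow> ('r, 'c) database \<Rightarrow> nat" where
  "count_FMS u k D = card {S. min_support u D S \<and> card S = k}"

text \<open>Size of queries: total number of symbols (relation atoms with their arguments,
  inequality atoms).\<close>
definition cq_size :: "('r, 'v, 'c) cqneq \<Rightarrow> nat" where
  "cq_size q = (\<Sum>a \<leftarrow> fst q. 1 + length (snd a)) + 3 * length (snd q)"

definition ucq_size :: "('r, 'v, 'c) ucqneq \<Rightarrow> nat" where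
  "ucq_size u = (\<Sum>q \<leftarrow> u. 1 + cq_size q)"

end

theory Submission
  imports Defs "HOL-Library.FuncSet"
begin


definition lmap :: "('a \<Rightarrow> 'b) \<Rightarrow> ('r \<times> 'a list) \<Rightarrow> ('r \<times> 'b list)" where
  "lmap f a = (fst a, map f (snd a))"

definition TA :: "('r \<times> 'a list) set \<Rightarrow> 'a set" where
  "TA A = (\<Union>a\<in>A. set (snd a))"

definition avars :: "('r \<times> ('v,'c) trm list) set \<Rightarrow> 'v set" where
  "avars A = {x. Var x \<in> TA A}"

definition goodh :: "'c set \<Rightarrow> 'v set \<Rightarrow> ('v \<Rightarrow> 'c) \<Rightarrow> bool" where
  "goodh K V h \<longleftrightarrow> inj_on h V \<and> h ` V \<inter> K = {}"

definition Inst :: "'c set \<Rightarrow> ('r \<times> ('v,'c) trm list) set \<Rightarrow> ('r, 'c) database set" where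
  "Inst K A = {lmap (eval_trm h) ` A | h. goodh K (avars A) h}"

definition lst :: "'a set \<Rightarrow> 'a list" where
  "lst A = (SOME xs. set xs = A \<and> distinct xs)"

lemma lst: "finite A \<Longrightarrow> set (lst A) = A \<and> distinct (lst A)"
  unfolding lst_def by (rule someI_ex) (rule finite_distinct_list)

lemma lmap_comp: "lmap f (lmap g a) = lmap (f \<circ> g) a"
  by (simp add: lmap_def)

lemma lmap_cong: "(\<And>t. t \<in> set (snd a) \<Longrightarrow> f t = g t) \<Longrightarrow> lmap f a = lmap g a"
  by (simp add: lmap_def)

lemma lmap_id: "lmap id a = a"
  by (simp add: lmap_def)

lemma lmap_inj:
  assumes "inj_on f (TA A)" shows "inj_on (lmap f) A"
proof (rule inj_onI)
  fix a b assume ab: "a \<in> A" "b \<in> A" "lmap f a = lmap f b"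
  have "inj_on f (set (snd a) \<union> set (snd b))"
    using assms ab by (auto simp: TA_def intro: inj_on_subset)
  then have "snd a = snd b" using ab(3) inj_on_map_eq_map[of f "snd a" "snd b"]
    by (simp add: lmap_def)
  moreover have "fst a = fst b" using ab(3) by (simp add: lmap_def)
  ultimately show "a = b" by (simp add: prod_eq_iff)
qed

lemma TA_lmap: "TA (lmap f ` A) = f ` TA A"
  by (auto simp: TA_def lmap_def)

lemma TA_insert: "TA (insert a A) = set (snd a) \<union> TA A"
  by (auto simp: TA_def)

lemma eval_subst: "eval_trm h (subst_trm g t) = eval_trm (\<lambda>x. eval_trm h (g x)) t"
  by (cases t) auto

lemma eval_inj:
  assumes "goodh K V h" "TA B \<subseteq> Var ` V \<union> Const ` K"
  shows "inj_on (eval_trm h) (TA B)"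
proof (rule inj_onI)
  fix s t assume st: "s \<in> TA B" "t \<in> TA B" "eval_trm h s = eval_trm h t"
  show "s = t"
  proof -
    have s: "s \<in> Var ` V \<union> Const ` K" and t: "t \<in> Var ` V \<union> Const ` K" using st assms(2) by auto
    have ih: "inj_on h V" and dj: "h ` V \<inter> K = {}" using assms(1) by (auto simp: goodh_def)
    from s show ?thesis
    proof
      assume "s \<in> Var ` V"
      then obtain x where x: "x \<in> V" "s = Var x" by blast
      from t show ?thesis
      proof
        assume "t \<in> Var ` V"
        then obtain y where y: "y \<in> V" "t = Var y" by blast
        then show ?thesis using x st(3) ih by (simp add: inj_on_def)
      next
        assume "t \<in> Const ` K"
        then obtain c where "c \<in> K" "t = Const c" by blast
        then show ?thesis using x st(3) dj by auto
      qed
    next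
      assume "s \<in> Const ` K"
      then obtain c where c: "c \<in> K" "s = Const c" by blast
      from t show ?thesis
      proof
        assume "t \<in> Var ` V"
        then obtain y where y: "y \<in> V" "t = Var y" by blast
        then show ?thesis using c st(3) dj by auto
      next
        assume "t \<in> Const ` K"
        then obtain d where "t = Const d" by blast
        then show ?thesis using c st(3) by auto
      qed
    qed
  qed
qed

lemma ifact_inj:
  assumes "goodh K V h" "TA B \<subseteq> Var ` V \<union> Const ` K"
  shows "inj_on (lmap (eval_trm h)) B"
  by (rule lmap_inj, rule eval_inj[OF assms])

lemma ext_bij:
  assumes "finite V" "goodh K V h" "goodh K V h1"
  shows "\<exists>\<sigma>. bij \<sigma> \<and> (\<forall>x\<in>V. \<sigma> (h x) = h1 x) \<and> (\<forall>c\<in>K. \<sigma> c = c)"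
proof -
  define A where "A = h ` V"
  define B where "B = h1 ` V"
  define f where "f = h1 \<circ> inv_into V h"
  have ih: "inj_on h V" and ih1: "inj_on h1 V" using assms by (auto simp: goodh_def)
  have fAB: "bij_betw f A B" unfolding f_def A_def B_def
    by (rule bij_betw_trans[OF bij_betw_inv_into]) (use ih ih1 in \<open>auto simp: bij_betw_def\<close>)
  have fin: "finite A" "finite B" using assms(1) by (auto simp: A_def B_def)
  have cAB: "card A = card B" using ih ih1 by (simp add: A_def B_def card_image)
  have "card (B - A) = card (A - B)"
    using fin cAB by (simp add: card_Diff_subset_Int Int_commute)
  then obtain e where e: "bij_betw e (B - A) (A - B)"
    using finite_same_card_bij[of "B - A" "A - B"] fin by auto
  define \<sigma> where "\<sigma> x = (if x \<in> A then f x else if x \<in> B then e x else x)" for x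
  have b1: "bij_betw \<sigma> A B" using fAB by (subst bij_betw_cong[where g=f]) (auto simp: \<sigma>_def)
  have b2: "bij_betw \<sigma> (B - A) (A - B)" using e by (subst bij_betw_cong[where g=e]) (auto simp: \<sigma>_def)
  have b3: "bij_betw \<sigma> (- (A \<union> B)) (- (A \<union> B))"
    by (subst bij_betw_cong[where g=id]) (auto simp: \<sigma>_def)
  have "bij_betw \<sigma> (A \<union> (B - A) \<union> (- (A \<union> B))) (B \<union> (A - B) \<union> (- (A \<union> B)))"
    by (rule bij_betw_combine[OF bij_betw_combine[OF b1 b2] b3]) auto
  moreover have "A \<union> (B - A) \<union> (- (A \<union> B)) = UNIV" "B \<union> (A - B) \<union> (- (A \<union> B)) = UNIV" by auto
  ultimately have "bij \<sigma>" by simp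
  moreover have "\<forall>x\<in>V. \<sigma> (h x) = h1 x"
    using ih by (auto simp: \<sigma>_def A_def f_def)
  moreover have "\<forall>c\<in>K. \<sigma> c = c"
    using assms by (auto simp: \<sigma>_def A_def B_def goodh_def)
  ultimately show ?thesis by blast
qed



definition qterms :: "('r, 'v, 'c) cqneq \<Rightarrow> ('v,'c) trm set" where
  "qterms q = TA (set (fst q)) \<union> (\<Union>p\<in>set (snd q). {fst p, snd p})"

definition uterms :: "('r, 'v, 'c) ucqneq \<Rightarrow> ('v,'c) trm set" where
  "uterms u = (\<Union>q\<in>set u. qterms q)"

definition uK :: "('r, 'v, 'c) ucqneq \<Rightarrow> 'c set" where
  "uK u = {c. Const c \<in> uterms u}"

definition uX :: "('r, 'v, 'c) ucqneq \<Rightarrow> 'v set" where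
  "uX u = {x. Var x \<in> uterms u}"

definition uR :: "('r, 'v, 'c) ucqneq \<Rightarrow> 'r set" where
  "uR u = (\<Union>q\<in>set u. fst ` set (fst q))"

definition uF :: "('r, 'v, 'c) ucqneq \<Rightarrow> ('r \<times> ('v,'c) trm list) set" where
  "uF u = {a. fst a \<in> uR u \<and> set (snd a) \<subseteq> uterms u \<and> length (snd a) \<le> ucq_size u}"

definition Mn :: "('r, 'v, 'c) ucqneq \<Rightarrow> nat \<Rightarrow> ('r, 'c) database \<Rightarrow> bool" where
  "Mn u k S \<longleftrightarrow> models S u \<and> (\<forall>S'. S' \<subset> S \<longrightarrow> \<not> models S' u) \<and> card S = k"

lemma TA_F:
  assumes "A \<subseteq> uF u" shows "TA A \<subseteq> Var ` avars A \<union> Const ` uK u"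
proof
  fix t assume t: "t \<in> TA A"
  then have "t \<in> uterms u" using assms by (auto simp: TA_def uF_def)
  then show "t \<in> Var ` avars A \<union> Const ` uK u"
    using t by (cases t) (auto simp: avars_def uK_def)
qed

lemma finite_TA: "finite A \<Longrightarrow> finite (TA A)"
  by (auto simp: TA_def)

lemma finite_avars: "finite A \<Longrightarrow> finite (avars A)"
proof -
  assume "finite A"
  then have "finite (TA A)" by (rule finite_TA)
  moreover have "avars A = Var -` TA A" by (auto simp: avars_def)
  ultimately show ?thesis by (simp add: finite_vimageI inj_def)
qed

lemma models_lmap:
  assumes "bij \<sigma>" "\<forall>c\<in>uK u. \<sigma> c = c" "models S u"
  shows "models (lmap \<sigma> ` S) u"
proof -
  obtain q h where q: "q \<in> set u" "is_hom q S h" using assms(3) by (auto simp: models_def)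
  have ev: "eval_trm (\<sigma> \<circ> h) t = \<sigma> (eval_trm h t)" if "t \<in> qterms q" for t
  proof (cases t)
    case (Const c)
    then have "c \<in> uK u" using that q(1) by (auto simp: uK_def uterms_def)
    then show ?thesis using assms(2) Const by simp
  qed simp
  have "is_hom q (lmap \<sigma> ` S) (\<sigma> \<circ> h)"
    unfolding is_hom_def
  proof (intro conjI ballI)
    fix a assume a: "a \<in> set (fst q)"
    obtain P ts where [simp]: "a = (P, ts)" by (cases a)
    have "(P, map (eval_trm h) ts) \<in> S" using q(2) a by (auto simp: is_hom_def)
    moreover have "map (eval_trm (\<sigma> \<circ> h)) ts = map \<sigma> (map (eval_trm h) ts)"
    proof -
      have "t \<in> qterms q" if "t \<in> set ts" for t using a that by (force simp: qterms_def TA_def)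
      then show ?thesis using ev by simp
    qed
    ultimately show "case a of (P, ts) \<Rightarrow> (P, map (eval_trm (\<sigma> \<circ> h)) ts) \<in> lmap \<sigma> ` S"
      by (auto simp: lmap_def image_iff intro!: bexI[of _ "(P, map (eval_trm h) ts)"])
  next
    fix p assume p: "p \<in> set (snd q)"
    obtain s t where [simp]: "p = (s, t)" by (cases p)
    have "eval_trm h s \<noteq> eval_trm h t" using q(2) p by (auto simp: is_hom_def)
    moreover have "s \<in> qterms q" "t \<in> qterms q" using p by (force simp: qterms_def)+
    ultimately show "case p of (s, t) \<Rightarrow> eval_trm (\<sigma> \<circ> h) s \<noteq> eval_trm (\<sigma> \<circ> h) t"
      using ev assms(1) by (auto simp: bij_def inj_eq)
  qed
  then show ?thesis using q(1) by (auto simp: models_def)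
qed

lemma lmap_inv_image:
  assumes "bij \<sigma>" shows "lmap (inv \<sigma>) ` lmap \<sigma> ` S = S"
proof -
  have "inv \<sigma> \<circ> \<sigma> = id" using assms by (simp add: bij_def)
  then show ?thesis by (simp add: image_image lmap_comp lmap_id)
qed

lemma inv_fix: "bij \<sigma> \<Longrightarrow> \<sigma> c = c \<Longrightarrow> inv \<sigma> c = c"
  by (metis bij_def inv_f_f)

lemma Mn_lmap:
  assumes "bij \<sigma>" "\<forall>c\<in>uK u. \<sigma> c = c" "Mn u k S"
  shows "Mn u k (lmap \<sigma> ` S)"
proof -
  have bi: "bij (inv \<sigma>)" using assms(1) by (rule bij_imp_bij_inv)
  have fi: "\<forall>c\<in>uK u. inv \<sigma> c = c" using assms(2) by (auto intro: inv_fix[OF assms(1)])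
  have i1: "inj (lmap \<sigma>)" by (rule lmap_inj, rule inj_on_subset[OF bij_is_inj[OF assms(1)] subset_UNIV])
  have i2: "inj (lmap (inv \<sigma>))" by (rule lmap_inj, rule inj_on_subset[OF bij_is_inj[OF bi] subset_UNIV])
  have c: "card (lmap \<sigma> ` S) = card S" proof -
    have "inj_on (lmap \<sigma>) S" using i1 by (rule inj_on_subset) simp
    then show ?thesis by (rule card_image)
  qed
  have M: "models S u" "\<And>S'. S' \<subset> S \<Longrightarrow> \<not> models S' u" "card S = k"
    using assms(3) unfolding Mn_def by auto
  have m: "models (lmap \<sigma> ` S) u" by (rule models_lmap[OF assms(1,2) M(1)])
  have "\<not> models S' u" if "S' \<subset> lmap \<sigma> ` S" for S'
  proof
    assume "models S' u"
    then have 1: "models (lmap (inv \<sigma>) ` S') u" by (rule models_lmap[OF bi fi])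
    have "lmap (inv \<sigma>) ` S' \<subset> lmap (inv \<sigma>) ` lmap \<sigma> ` S"
      by (rule image_strict_mono[OF inj_on_subset[OF i2 subset_UNIV] that])
    then have "lmap (inv \<sigma>) ` S' \<subset> S" by (simp only: lmap_inv_image[OF assms(1)])
    then show False using M(2) 1 by blast
  qed
  then show ?thesis using c m M(3) unfolding Mn_def by blast
qed

lemma lmap_shift:
  assumes "A \<subseteq> uF u" "\<forall>x\<in>avars A. \<sigma> (h x) = h1 x" "\<forall>c\<in>uK u. \<sigma> c = c"
  shows "lmap \<sigma> ` lmap (eval_trm h) ` A = lmap (eval_trm h1) ` A"
proof -
  have "lmap \<sigma> (lmap (eval_trm h) a) = lmap (eval_trm h1) a" if a: "a \<in> A" for a
  proof -
    have "(\<sigma> \<circ> eval_trm h) t = eval_trm h1 t" if t: "t \<in> set (snd a)" for t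
    proof -
      have "t \<in> TA A" using a t unfolding TA_def by blast
      then have "t \<in> Var ` avars A \<union> Const ` uK u" using TA_F[OF assms(1)] by blast
      then show ?thesis using assms(2,3) by auto
    qed
    then have "lmap (\<sigma> \<circ> eval_trm h) a = lmap (eval_trm h1) a" by (rule lmap_cong)
    then show ?thesis by (simp only: lmap_comp)
  qed
  then show ?thesis by (simp add: image_image)
qed

lemma Inst_Mn:
  assumes "A \<subseteq> uF u" "finite A" "S \<in> Inst (uK u) A" "Mn u k S" "T \<in> Inst (uK u) A"
  shows "Mn u k T"
proof -
  obtain h where h: "goodh (uK u) (avars A) h" "S = lmap (eval_trm h) ` A" using assms(3) by (auto simp: Inst_def)
  obtain h1 where h1: "goodh (uK u) (avars A) h1" "T = lmap (eval_trm h1) ` A" using assms(5) by (auto simp: Inst_def)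
  obtain \<sigma> where s: "bij \<sigma>" "\<forall>x\<in>avars A. \<sigma> (h x) = h1 x" "\<forall>c\<in>uK u. \<sigma> c = c"
    using ext_bij[OF finite_avars[OF assms(2)] h(1) h1(1)] by blast
  have "T = lmap \<sigma> ` S" using lmap_shift[OF assms(1) s(2,3)] h h1 by simp
  then show ?thesis using Mn_lmap[OF s(1,3) assms(4)] by simp
qed

lemma Inst_overlap:
  assumes "A \<subseteq> uF u" "finite A" "A' \<subseteq> uF u" "S \<in> Inst (uK u) A" "S \<in> Inst (uK u) A'"
  shows "Inst (uK u) A \<subseteq> Inst (uK u) A'"
proof
  fix T assume T: "T \<in> Inst (uK u) A"
  obtain h where h: "goodh (uK u) (avars A) h" "S = lmap (eval_trm h) ` A" using assms(4) by (auto simp: Inst_def)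
  obtain h' where h': "goodh (uK u) (avars A') h'" "S = lmap (eval_trm h') ` A'" using assms(5) by (auto simp: Inst_def)
  obtain h1 where h1: "goodh (uK u) (avars A) h1" "T = lmap (eval_trm h1) ` A" using T by (auto simp: Inst_def)
  obtain \<sigma> where s: "bij \<sigma>" "\<forall>x\<in>avars A. \<sigma> (h x) = h1 x" "\<forall>c\<in>uK u. \<sigma> c = c"
    using ext_bij[OF finite_avars[OF assms(2)] h(1) h1(1)] by blast
  have "T = lmap \<sigma> ` S" using lmap_shift[OF assms(1) s(2,3)] h h1 by simp
  also have "\<dots> = lmap (eval_trm (\<sigma> \<circ> h')) ` A'"
    using lmap_shift[OF assms(3), of "\<sigma>" h' "\<sigma> \<circ> h'"] s(3) h'(2) by simp
  finally have T': "T = lmap (eval_trm (\<sigma> \<circ> h')) ` A'" .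
  have "goodh (uK u) (avars A') (\<sigma> \<circ> h')"
  proof -
    have "inj_on h' (avars A')" using h'(1) by (simp add: goodh_def)
    then have "inj_on (\<sigma> \<circ> h') (avars A')"
      by (rule comp_inj_on) (rule inj_on_subset[OF bij_is_inj[OF s(1)] subset_UNIV])
    moreover have "(\<sigma> \<circ> h') ` avars A' \<inter> uK u = {}"
    proof -
      have "\<sigma> (h' x) \<noteq> c" if "x \<in> avars A'" "c \<in> uK u" for x c
      proof
        assume "\<sigma> (h' x) = c"
        then have "\<sigma> (h' x) = \<sigma> c" using s(3) that(2) by simp
        then have "h' x = c" using s(1) by (simp add: bij_def inj_eq)
        then show False using h'(1) that by (auto simp: goodh_def)
      qed
      then show ?thesis by auto
    qed
    ultimately show ?thesis by (simp add: goodh_def)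
  qed
  then show "T \<in> Inst (uK u) A'" using T' by (auto simp: Inst_def)
qed



definition ineqs :: "'c set \<Rightarrow> 'v set \<Rightarrow> (('v,'c) trm \<times> ('v,'c) trm) list" where
  "ineqs K V = filter (\<lambda>p. fst p \<noteq> snd p) (map (\<lambda>p. (Var (fst p), Var (snd p))) (List.product (lst V) (lst V)))
              @ map (\<lambda>p. (Var (fst p), Const (snd p))) (List.product (lst V) (lst K))"

definition qry :: "'c set \<Rightarrow> ('r \<times> ('v,'c) trm list) set \<Rightarrow> ('r,'v,'c) cqneq" where
  "qry K A = (lst A, ineqs K (avars A))"

lemma set_ineqs:
  assumes "finite V" "finite K"
  shows "set (ineqs K V) = {(Var x, Var y) |x y. x \<in> V \<and> y \<in> V \<and> x \<noteq> y} \<union> {(Var x, Const c) |x c. x \<in> V \<and> c \<in> K}"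
  using lst[OF assms(1)] lst[OF assms(2)] by (auto simp: ineqs_def image_iff)

lemma UN_trm_vars: "(\<Union>t\<in>T. trm_vars t) = {x. Var x \<in> T}"
proof -
  have "x \<in> trm_vars t \<longleftrightarrow> t = Var x" for x and t :: "('a,'b) trm" by (cases t) auto
  then show ?thesis by auto
qed

lemma rel_vars_set: "rel_vars (as, bs) = avars (set as)"
proof -
  have "rel_vars (as, bs) = (\<Union>a\<in>set as. \<Union>t\<in>set (snd a). trm_vars t)"
    unfolding rel_vars_def by (auto simp: case_prod_beta)
  also have "\<dots> = (\<Union>t\<in>TA (set as). trm_vars t)" by (auto simp: TA_def)
  also have "\<dots> = avars (set as)" by (simp add: UN_trm_vars avars_def)
  finally show ?thesis .
qed

context
  fixes K :: "'c set" and A :: "('r \<times> ('v,'c) trm list) set"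
  assumes finA: "finite A" and finK: "finite K"
begin

lemma setA: "set (lst A) = A" using lst[OF finA] by simp

lemma finV: "finite (avars A)" by (rule finite_avars[OF finA])

lemma cq_vars_qry: "cq_vars (qry K A) = avars A"
proof -
  have "rel_vars (qry K A) = avars A" unfolding qry_def rel_vars_set setA ..
  moreover have "(\<Union>(s, t) \<in> set (snd (qry K A)). trm_vars s \<union> trm_vars t) \<subseteq> avars A"
    using set_ineqs[OF finV finK] by (auto simp: qry_def)
  ultimately show ?thesis unfolding cq_vars_def by blast
qed

lemma safe_qry: "safe_cq (qry K A)"
  unfolding safe_cq_def cq_vars_qry using qry_def rel_vars_set setA by (metis order_refl)

lemma ineq_iff:
  "(\<forall>p \<in> set (ineqs K (avars A)). f (fst p) \<noteq> f (snd p)) \<longleftrightarrow>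
     (\<forall>x\<in>avars A. \<forall>y\<in>avars A. x \<noteq> y \<longrightarrow> f (Var x) \<noteq> f (Var y)) \<and> (\<forall>x\<in>avars A. \<forall>c\<in>K. f (Var x) \<noteq> f (Const c))"
  unfolding set_ineqs[OF finV finK]
proof (intro iffI conjI ballI impI)
  fix x y assume H: "\<forall>p\<in>{(Var x, Var y) |x y. x \<in> avars A \<and> y \<in> avars A \<and> x \<noteq> y} \<union>
         {(Var x, Const c) |x c. x \<in> avars A \<and> c \<in> K}. f (fst p) \<noteq> f (snd p)"
    and xy: "x \<in> avars A" "y \<in> avars A" "x \<noteq> y"
  have "(Var x, Var y) \<in> {(Var x, Var y) |x y. x \<in> avars A \<and> y \<in> avars A \<and> x \<noteq> y}" using xy by blast
  from bspec[OF H UnI1[OF this]] show "f (Var x) \<noteq> f (Var y)" by simp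
next
  fix x c assume H: "\<forall>p\<in>{(Var x, Var y) |x y. x \<in> avars A \<and> y \<in> avars A \<and> x \<noteq> y} \<union>
         {(Var x, Const c) |x c. x \<in> avars A \<and> c \<in> K}. f (fst p) \<noteq> f (snd p)"
    and xc: "x \<in> avars A" "c \<in> K"
  have "(Var x, Const c) \<in> {(Var x, Const c) |x c. x \<in> avars A \<and> c \<in> K}" using xc by blast
  from bspec[OF H UnI2[OF this]] show "f (Var x) \<noteq> f (Const c)" by simp
next
  fix p :: "('v,'c) trm \<times> ('v,'c) trm" assume H: "(\<forall>x\<in>avars A. \<forall>y\<in>avars A. x \<noteq> y \<longrightarrow> f (Var x) \<noteq> f (Var y)) \<and>
     (\<forall>x\<in>avars A. \<forall>c\<in>K. f (Var x) \<noteq> f (Const c))"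
    and p: "p \<in> {(Var x, Var y) |x y. x \<in> avars A \<and> y \<in> avars A \<and> x \<noteq> y} \<union>
         {(Var x, Const c) |x c. x \<in> avars A \<and> c \<in> K}"
  from p show "f (fst p) \<noteq> f (snd p)"
  proof
    assume "p \<in> {(Var x, Var y) |x y. x \<in> avars A \<and> y \<in> avars A \<and> x \<noteq> y}"
    then obtain x y where "p = (Var x, Var y)" "x \<in> avars A" "y \<in> avars A" "x \<noteq> y" by blast
    then show ?thesis using H by simp
  next
    assume "p \<in> {(Var x, Const c) |x c. x \<in> avars A \<and> c \<in> K}"
    then obtain x c where "p = (Var x, Const c)" "x \<in> avars A" "c \<in> K" by blast
    then show ?thesis using H by simp
  qed
qed

lemma is_hom_qry:
  "is_hom (qry K A) D h \<longleftrightarrow> lmap (eval_trm h) ` A \<subseteq> D \<and> goodh K (avars A) h"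
proof -
  have 1: "(\<forall>(P, ts) \<in> set (fst (qry K A)). (P, map (eval_trm h) ts) \<in> D) \<longleftrightarrow> lmap (eval_trm h) ` A \<subseteq> D"
    by (auto simp: qry_def setA lmap_def)
  have "(\<forall>(s, t) \<in> set (snd (qry K A)). eval_trm h s \<noteq> eval_trm h t) \<longleftrightarrow>
     (\<forall>p \<in> set (ineqs K (avars A)). eval_trm h (fst p) \<noteq> eval_trm h (snd p))"
    by (simp add: qry_def case_prod_beta)
  also have "\<dots> \<longleftrightarrow> goodh K (avars A) h"
    unfolding ineq_iff goodh_def inj_on_def by auto
  finally show ?thesis unfolding is_hom_def using 1 by blast
qed

lemma Hom_qry:
  "Hom (qry K A) D = {h. lmap (eval_trm h) ` A \<subseteq> D \<and> goodh K (avars A) h \<and> (\<forall>x. x \<notin> avars A \<longrightarrow> h x = undefined)}"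
  unfolding Hom_def is_hom_qry cq_vars_qry by simp

lemma Aut_qry:
  "Aut (qry K A) = {g. (\<forall>a\<in>A. lmap (subst_trm g) a \<in> A) \<and> inj_on g (avars A) \<and>
      (\<forall>x\<in>avars A. \<forall>c\<in>K. g x \<noteq> Const c) \<and> (\<forall>x. x \<notin> avars A \<longrightarrow> g x = Var x)}"
proof -
  have 1: "(\<forall>(P, ts) \<in> set (fst (qry K A)). (P, map (subst_trm g) ts) \<in> set (fst (qry K A))) \<longleftrightarrow>
      (\<forall>a\<in>A. lmap (subst_trm g) a \<in> A)" for g
    by (auto simp: qry_def setA lmap_def)
  have 2: "(\<forall>(s, t) \<in> set (snd (qry K A)). subst_trm g s \<noteq> subst_trm g t) \<longleftrightarrow>
      inj_on g (avars A) \<and> (\<forall>x\<in>avars A. \<forall>c\<in>K. g x \<noteq> Const c)" for g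
  proof -
    have "(\<forall>(s, t) \<in> set (snd (qry K A)). subst_trm g s \<noteq> subst_trm g t) \<longleftrightarrow>
     (\<forall>p \<in> set (ineqs K (avars A)). subst_trm g (fst p) \<noteq> subst_trm g (snd p))"
      by (simp add: qry_def case_prod_beta)
    also have "\<dots> \<longleftrightarrow> inj_on g (avars A) \<and> (\<forall>x\<in>avars A. \<forall>c\<in>K. g x \<noteq> Const c)"
      unfolding ineq_iff inj_on_def by auto
    finally show ?thesis .
  qed
  show ?thesis unfolding Aut_def is_qhom_def cq_vars_qry using 1 2 by blast
qed

end



definition phi :: "('v \<Rightarrow> 'c) \<Rightarrow> 'v set \<Rightarrow> ('v \<Rightarrow> ('v,'c) trm) \<Rightarrow> 'v \<Rightarrow> 'c" where
  "phi h0 V g = (\<lambda>x. if x \<in> V then eval_trm h0 (g x) else undefined)"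

lemma subst_inj:
  assumes "\<forall>x\<in>V. \<exists>y. g x = Var y" "inj_on g V"
  shows "inj_on (subst_trm g) (Var ` V \<union> Const ` K)"
proof (rule inj_onI)
  fix s t assume s: "s \<in> Var ` V \<union> Const ` K" and t: "t \<in> Var ` V \<union> Const ` K"
    and e: "subst_trm g s = subst_trm g t"
  show "s = t"
  proof (cases s)
    case (Var x)
    then have x: "x \<in> V" using s by auto
    then obtain y where y: "g x = Var y" using assms(1) by blast
    show ?thesis
    proof (cases t)
      case (Var x')
      then have "x' \<in> V" using t by auto
      then show ?thesis using x e Var \<open>s = Var x\<close> assms(2) by (auto simp: inj_on_def)
    next
      case (Const c)
      then show ?thesis using e y \<open>s = Var x\<close> by simp
    qed
  next
    case (Const c)
    show ?thesis
    proof (cases t)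
      case (Var x')
      then have "x' \<in> V" using t by auto
      then obtain y where "g x' = Var y" using assms(1) by blast
      then show ?thesis using e Var Const by simp
    next
      case (Const d)
      then show ?thesis using e \<open>s = Const c\<close> by simp
    qed
  qed
qed

context
  fixes K :: "'c set" and A :: "('r \<times> ('v,'c) trm list) set"
  assumes finA: "finite A" and finK: "finite K" and wf: "TA A \<subseteq> Var ` avars A \<union> Const ` K"
begin

lemma avarsE: "x \<in> avars A \<Longrightarrow> \<exists>a\<in>A. Var x \<in> set (snd a)"
  by (auto simp: avars_def TA_def)

lemma AutD:
  assumes "g \<in> Aut (qry K A)"
  shows "\<forall>a\<in>A. lmap (subst_trm g) a \<in> A" "inj_on g (avars A)"
    "\<forall>x\<in>avars A. \<forall>c\<in>K. g x \<noteq> Const c" "\<forall>x. x \<notin> avars A \<longrightarrow> g x = Var x"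
  using assms unfolding Aut_qry[OF finA finK] by simp_all

lemma HomD:
  assumes "h \<in> Hom (qry K A) D"
  shows "lmap (eval_trm h) ` A \<subseteq> D" "goodh K (avars A) h" "\<forall>x. x \<notin> avars A \<longrightarrow> h x = undefined"
  using assms unfolding Hom_qry[OF finA finK] by simp_all

lemma aut_var:
  assumes "g \<in> Aut (qry K A)" "x \<in> avars A"
  shows "\<exists>y\<in>avars A. g x = Var y"
proof -
  note g = AutD[OF assms(1)]
  obtain a where a: "a \<in> A" "Var x \<in> set (snd a)" using avarsE[OF assms(2)] by blast
  have "g x \<in> set (snd (lmap (subst_trm g) a))" using a(2) by (force simp: lmap_def)
  then have "g x \<in> TA A" using g(1) a(1) unfolding TA_def by blast
  then have "g x \<in> Var ` avars A \<union> Const ` K" using wf by blast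
  then show ?thesis using g(3) assms(2) by blast
qed

lemma eval_phi:
  assumes "a \<in> A"
  shows "lmap (eval_trm h0) (lmap (subst_trm g) a) = lmap (eval_trm (phi h0 (avars A) g)) a"
proof -
  have "(eval_trm h0 \<circ> subst_trm g) t = eval_trm (phi h0 (avars A) g) t" if t: "t \<in> set (snd a)" for t
  proof -
    have "t \<in> TA A" using assms t unfolding TA_def by blast
    then have "t \<in> Var ` avars A \<union> Const ` K" using wf by blast
    then show ?thesis by (auto simp: phi_def)
  qed
  then have "lmap (eval_trm h0 \<circ> subst_trm g) a = lmap (eval_trm (phi h0 (avars A) g)) a" by (rule lmap_cong)
  then show ?thesis by (simp only: lmap_comp)
qed

lemma aut_perm:
  assumes "g \<in> Aut (qry K A)"
  shows "lmap (subst_trm g) ` A = A"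
proof -
  note g = AutD[OF assms]
  have "\<forall>x\<in>avars A. \<exists>y. g x = Var y" using aut_var[OF assms] by blast
  then have "inj_on (subst_trm g) (Var ` avars A \<union> Const ` K)" using subst_inj g(2) by blast
  then have "inj_on (subst_trm g) (TA A)" using wf by (rule inj_on_subset)
  then have "inj_on (lmap (subst_trm g)) A" by (rule lmap_inj)
  moreover have "lmap (subst_trm g) ` A \<subseteq> A" using g(1) by blast
  ultimately show ?thesis using endo_inj_surj[OF finA] by blast
qed

lemma elems_inst:
  assumes "goodh K (avars A) h"
  shows "TA (lmap (eval_trm h) ` A) - K = h ` avars A"
proof
  show "TA (lmap (eval_trm h) ` A) - K \<subseteq> h ` avars A"
  proof
    fix e assume e: "e \<in> TA (lmap (eval_trm h) ` A) - K"
    then obtain t where t: "t \<in> TA A" "e = eval_trm h t" "e \<notin> K" unfolding TA_lmap by blast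
    then have "t \<in> Var ` avars A \<union> Const ` K" using wf by blast
    then show "e \<in> h ` avars A" using t by auto
  qed
next
  show "h ` avars A \<subseteq> TA (lmap (eval_trm h) ` A) - K"
  proof
    fix e assume "e \<in> h ` avars A"
    then obtain x where x: "x \<in> avars A" "e = h x" by blast
    then have "Var x \<in> TA A" by (simp add: avars_def)
    then have "e \<in> eval_trm h ` TA A" using x by force
    moreover have "e \<notin> K" using assms x by (auto simp: goodh_def)
    ultimately show "e \<in> TA (lmap (eval_trm h) ` A) - K" unfolding TA_lmap by blast
  qed
qed

abbreviation fib where
  "fib D h0 \<equiv> {h \<in> Hom (qry K A) D. lmap (eval_trm h) ` A = lmap (eval_trm h0) ` A}"

lemma fiber_bij:
  assumes h0: "h0 \<in> Hom (qry K A) D"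
  shows "bij_betw (phi h0 (avars A)) (Aut (qry K A)) (fib D h0)"
proof -
  let ?V = "avars A"
  note H0 = HomD[OF h0]
  have ih0: "inj_on h0 ?V" and dj0: "h0 ` ?V \<inter> K = {}" using H0(2) by (auto simp: goodh_def)
  have inA: "lmap (eval_trm (phi h0 ?V g)) ` A = lmap (eval_trm h0) ` A" if g: "g \<in> Aut (qry K A)" for g
  proof -
    have "lmap (eval_trm (phi h0 ?V g)) ` A = lmap (eval_trm h0) ` lmap (subst_trm g) ` A"
      using eval_phi by (simp add: image_image)
    then show ?thesis using aut_perm[OF g] by simp
  qed
  show ?thesis unfolding bij_betw_def
  proof (intro conjI)
    show "inj_on (phi h0 ?V) (Aut (qry K A))"
    proof (rule inj_onI)
      fix g1 g2 assume g1: "g1 \<in> Aut (qry K A)" and g2: "g2 \<in> Aut (qry K A)"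
        and e: "phi h0 ?V g1 = phi h0 ?V g2"
      show "g1 = g2"
      proof
        fix x show "g1 x = g2 x"
        proof (cases "x \<in> ?V")
          case True
          obtain y1 where y1: "y1 \<in> ?V" "g1 x = Var y1" using aut_var[OF g1 True] by blast
          obtain y2 where y2: "y2 \<in> ?V" "g2 x = Var y2" using aut_var[OF g2 True] by blast
          have "h0 y1 = h0 y2" using fun_cong[OF e, of x] True y1 y2 by (simp add: phi_def)
          then show ?thesis using ih0 y1 y2 by (simp add: inj_on_def)
        next
          case False
          then show ?thesis using AutD(4)[OF g1] AutD(4)[OF g2] by simp
        qed
      qed
    qed
  next
    show "phi h0 ?V ` Aut (qry K A) = fib D h0"
    proof
      show "phi h0 ?V ` Aut (qry K A) \<subseteq> fib D h0"
      proof
        fix h assume "h \<in> phi h0 ?V ` Aut (qry K A)"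
        then obtain g where g: "g \<in> Aut (qry K A)" and h: "h = phi h0 ?V g" by blast
        have 1: "lmap (eval_trm h) ` A = lmap (eval_trm h0) ` A" using inA[OF g] h by simp
        have 2: "inj_on h ?V"
        proof (rule inj_onI)
          fix x1 x2 assume x: "x1 \<in> ?V" "x2 \<in> ?V" "h x1 = h x2"
          obtain y1 where y1: "y1 \<in> ?V" "g x1 = Var y1" using aut_var[OF g x(1)] by blast
          obtain y2 where y2: "y2 \<in> ?V" "g x2 = Var y2" using aut_var[OF g x(2)] by blast
          have "h0 y1 = h0 y2" using x y1 y2 h by (simp add: phi_def)
          then have "y1 = y2" using ih0 y1 y2 by (simp add: inj_on_def)
          then have "g x1 = g x2" using y1 y2 by simp
          then show "x1 = x2" using AutD(2)[OF g] x by (simp add: inj_on_def)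
        qed
        have 3: "h ` ?V \<inter> K = {}"
        proof -
          have "h x \<notin> K" if xV: "x \<in> ?V" for x
          proof -
            obtain y where y: "y \<in> ?V" "g x = Var y" using aut_var[OF g xV] by blast
            then have "h x = h0 y" using xV h by (simp add: phi_def)
            then show ?thesis using dj0 y by blast
          qed
          then show ?thesis by blast
        qed
        have 4: "\<forall>x. x \<notin> ?V \<longrightarrow> h x = undefined" using h by (simp add: phi_def)
        have "h \<in> Hom (qry K A) D" unfolding Hom_qry[OF finA finK]
          using 1 2 3 4 H0(1) by (simp add: goodh_def)
        then show "h \<in> fib D h0" using 1 by simp
      qed
    next
      show "fib D h0 \<subseteq> phi h0 ?V ` Aut (qry K A)"
      proof
        fix h assume hf: "h \<in> fib D h0"
        then have hH: "h \<in> Hom (qry K A) D" and hS: "lmap (eval_trm h) ` A = lmap (eval_trm h0) ` A"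
          by simp_all
        note H = HomD[OF hH]
        have ih: "inj_on h ?V" and dj: "h ` ?V \<inter> K = {}" using H(2) by (auto simp: goodh_def)
        have im: "h ` ?V = h0 ` ?V" using elems_inst[OF H(2)] elems_inst[OF H0(2)] hS by simp
        define g :: "'v \<Rightarrow> ('v,'c) trm" where "g x = (if x \<in> ?V then Var (inv_into ?V h0 (h x)) else Var x)" for x
        have gV: "inv_into ?V h0 (h x) \<in> ?V" if "x \<in> ?V" for x
          using that im by (intro inv_into_into) blast
        have hx: "h0 (inv_into ?V h0 (h x)) = h x" if "x \<in> ?V" for x
          using that im by (intro f_inv_into_f) blast
        have ph: "phi h0 ?V g = h"
        proof
          fix x show "phi h0 ?V g x = h x"
            using hx H(3) by (cases "x \<in> ?V") (simp_all add: phi_def g_def)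
        qed
        have ginj: "inj_on g ?V"
        proof (rule inj_onI)
          fix x1 x2 assume x: "x1 \<in> ?V" "x2 \<in> ?V" "g x1 = g x2"
          then have "inv_into ?V h0 (h x1) = inv_into ?V h0 (h x2)" by (simp add: g_def)
          then have "h x1 = h x2" using hx[OF x(1)] hx[OF x(2)] by metis
          then show "x1 = x2" using ih x by (simp add: inj_on_def)
        qed
        have gA: "lmap (subst_trm g) a \<in> A" if a: "a \<in> A" for a
        proof -
          let ?b = "lmap (subst_trm g) a"
          have "TA {?b} \<subseteq> Var ` ?V \<union> Const ` K"
          proof
            fix t assume "t \<in> TA {?b}"
            then obtain s where s: "s \<in> set (snd a)" "t = subst_trm g s" by (auto simp: TA_def lmap_def)
            have "s \<in> TA A" using s a unfolding TA_def by blast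
            then have "s \<in> Var ` ?V \<union> Const ` K" using wf by blast
            then show "t \<in> Var ` ?V \<union> Const ` K" using s gV by (auto simp: g_def)
          qed
          then have "TA (insert ?b A) \<subseteq> Var ` ?V \<union> Const ` K" using wf by (auto simp: TA_def)
          then have inj: "inj_on (lmap (eval_trm h0)) (insert ?b A)" by (rule ifact_inj[OF H0(2)])
          have "lmap (eval_trm h0) ?b = lmap (eval_trm h) a" using eval_phi[OF a] ph by simp
          then have "lmap (eval_trm h0) ?b \<in> lmap (eval_trm h0) ` A" using hS a by blast
          then obtain a' where a': "a' \<in> A" "lmap (eval_trm h0) ?b = lmap (eval_trm h0) a'" by blast
          then have "?b = a'" using inj by (auto simp: inj_on_def)
          then show ?thesis using a' by simp
        qed
        have "g \<in> Aut (qry K A)" unfolding Aut_qry[OF finA finK]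
          using gA ginj by (simp add: g_def)
        then show "h \<in> phi h0 ?V ` Aut (qry K A)" using ph by blast
      qed
    qed
  qed
qed

end



context
  fixes K :: "'c set" and A :: "('r \<times> ('v,'c) trm list) set"
  assumes finA: "finite A" and finK: "finite K" and wf: "TA A \<subseteq> Var ` avars A \<union> Const ` K"
begin

abbreviation CC where "CC D \<equiv> {S. S \<subseteq> D \<and> S \<in> Inst K A}"

lemma finite_Hom:
  assumes "finite D" shows "finite (Hom (qry K A) D)"
proof -
  have "Hom (qry K A) D \<subseteq> PiE (avars A) (\<lambda>_. TA D)"
  proof
    fix h assume h: "h \<in> Hom (qry K A) D"
    note H = HomD[OF finA finK wf h]
    have "h x \<in> TA D" if x: "x \<in> avars A" for x
    proof -
      obtain a where a: "a \<in> A" "Var x \<in> set (snd a)" using x by (auto simp: avars_def TA_def)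
      have "lmap (eval_trm h) a \<in> D" using H(1) a(1) by blast
      moreover have "h x \<in> set (snd (lmap (eval_trm h) a))" using a(2) by (force simp: lmap_def)
      ultimately show ?thesis unfolding TA_def by blast
    qed
    then show "h \<in> PiE (avars A) (\<lambda>_. TA D)" using H(3) by (auto simp: PiE_iff extensional_def)
  qed
  moreover have "finite (PiE (avars A) (\<lambda>_. TA D))"
    by (rule finite_PiE[OF finite_avars[OF finA]]) (simp add: finite_TA assms)
  ultimately show ?thesis by (rule finite_subset)
qed

lemma image_Hom: "(\<lambda>h. lmap (eval_trm h) ` A) ` Hom (qry K A) D = CC D"
proof
  show "(\<lambda>h. lmap (eval_trm h) ` A) ` Hom (qry K A) D \<subseteq> CC D"
  proof
    fix S assume "S \<in> (\<lambda>h. lmap (eval_trm h) ` A) ` Hom (qry K A) D"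
    then obtain h where h: "h \<in> Hom (qry K A) D" "S = lmap (eval_trm h) ` A" by blast
    note H = HomD[OF finA finK wf h(1)]
    show "S \<in> CC D" using H h(2) by (auto simp: Inst_def)
  qed
next
  show "CC D \<subseteq> (\<lambda>h. lmap (eval_trm h) ` A) ` Hom (qry K A) D"
  proof
    fix S assume S: "S \<in> CC D"
    then obtain h where h: "goodh K (avars A) h" "S = lmap (eval_trm h) ` A" "S \<subseteq> D"
      by (auto simp: Inst_def)
    define h' where "h' x = (if x \<in> avars A then h x else undefined)" for x
    have e: "lmap (eval_trm h') a = lmap (eval_trm h) a" if a: "a \<in> A" for a
    proof (rule lmap_cong)
      fix t assume t: "t \<in> set (snd a)"
      have "t \<in> TA A" using a t unfolding TA_def by blast
      then have "t \<in> Var ` avars A \<union> Const ` K" using wf by blast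
      then show "eval_trm h' t = eval_trm h t" by (auto simp: h'_def)
    qed
    have S': "lmap (eval_trm h') ` A = S" unfolding h(2) by (rule image_cong[OF refl e])
    have "inj_on h' (avars A) \<longleftrightarrow> inj_on h (avars A)" by (rule inj_on_cong) (simp add: h'_def)
    moreover have "h' ` avars A = h ` avars A" by (rule image_cong[OF refl]) (simp add: h'_def)
    ultimately have g: "goodh K (avars A) h'" using h(1) by (simp add: goodh_def)
    have "h' \<in> Hom (qry K A) D" unfolding Hom_qry[OF finA finK]
      using S' h(3) g by (simp add: h'_def)
    then show "S \<in> (\<lambda>h. lmap (eval_trm h) ` A) ` Hom (qry K A) D" using S' by blast
  qed
qed

lemma fib_eq:
  assumes "h0 \<in> Hom (qry K A) D"
  shows "{h \<in> Hom (qry K A) D. lmap (eval_trm h) ` A = lmap (eval_trm h0) ` A} = {h \<in> Hom (qry K A) D. lmap (eval_trm h) ` A = lmap (eval_trm h0) ` A}"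
  by simp

lemma card_Hom:
  assumes finD: "finite D"
  shows "card (Hom (qry K A) D) = card (Aut (qry K A)) * card (CC D)"
proof -
  let ?H = "Hom (qry K A) D" and ?f = "\<lambda>h. lmap (eval_trm h) ` A"
  let ?F = "\<lambda>S. {h \<in> ?H. ?f h = S}"
  have finH: "finite ?H" by (rule finite_Hom[OF finD])
  have finC: "finite (CC D)"
    by (rule finite_subset[of _ "Pow D"]) (auto simp: finD)
  have U: "?H = (\<Union>S\<in>CC D. ?F S)"
  proof
    show "?H \<subseteq> (\<Union>S\<in>CC D. ?F S)"
    proof
      fix h assume h: "h \<in> ?H"
      then have "?f h \<in> ?f ` ?H" by (rule imageI)
      then have "?f h \<in> CC D" unfolding image_Hom .
      then show "h \<in> (\<Union>S\<in>CC D. ?F S)" using h by blast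
    qed
  qed blast
  have fF: "\<forall>S\<in>CC D. finite (?F S)"
  proof
    fix S show "finite (?F S)" by (rule finite_subset[OF _ finH]) blast
  qed
  have dF: "\<forall>S\<in>CC D. \<forall>S'\<in>CC D. S \<noteq> S' \<longrightarrow> ?F S \<inter> ?F S' = {}" by blast
  have "card ?H = card (\<Union>S\<in>CC D. ?F S)" using U by (rule arg_cong)
  also have "\<dots> = (\<Sum>S\<in>CC D. card (?F S))"
    by (rule card_UN_disjoint[OF finC fF dF])
  also have "\<dots> = (\<Sum>S\<in>CC D. card (Aut (qry K A)))"
  proof (rule sum.cong[OF refl])
    fix S assume S: "S \<in> CC D"
    then have "S \<in> ?f ` ?H" unfolding image_Hom .
    then obtain h0 where h0: "h0 \<in> ?H" "S = ?f h0" by blast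
    have "?F S = {h \<in> Hom (qry K A) D. lmap (eval_trm h) ` A = lmap (eval_trm h0) ` A}" using fib_eq[OF h0(1)] h0(2) by simp
    then show "card (?F S) = card (Aut (qry K A))"
      using bij_betw_same_card[OF fiber_bij[OF finA finK wf h0(1)]] by simp
  qed
  also have "\<dots> = card (Aut (qry K A)) * card (CC D)" by simp
  finally show ?thesis .
qed

lemma card_Aut_pos:
  assumes finD: "finite D" and ne: "CC D \<noteq> {}"
  shows "card (Aut (qry K A)) > 0"
proof -
  obtain S where "S \<in> CC D" using ne by blast
  then have "S \<in> (\<lambda>h. lmap (eval_trm h) ` A) ` Hom (qry K A) D" unfolding image_Hom .
  then obtain h0 where h0: "h0 \<in> Hom (qry K A) D" by blast
  have "h0 \<in> {h \<in> Hom (qry K A) D. lmap (eval_trm h) ` A = lmap (eval_trm h0) ` A}" using h0 by simp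
  moreover have "finite ({h \<in> Hom (qry K A) D. lmap (eval_trm h) ` A = lmap (eval_trm h0) ` A})"
    by (rule finite_subset[OF _ finite_Hom[OF finD]]) auto
  ultimately have "card ({h \<in> Hom (qry K A) D. lmap (eval_trm h) ` A = lmap (eval_trm h0) ` A}) > 0" by (auto simp: card_gt_0_iff)
  then show ?thesis using bij_betw_same_card[OF fiber_bij[OF finA finK wf h0]] by simp
qed

lemma rat_eq:
  assumes finD: "finite D"
  shows "(of_nat (count_hom (qry K A) D) :: rat) * (1 / of_nat (card (Aut (qry K A)))) = of_nat (card (CC D))"
proof (cases "CC D = {}")
  case True
  have c0: "card (CC D) = 0" by (simp only: True card.empty)
  show ?thesis using card_Hom[OF finD] c0 by (simp add: count_hom_def)
next
  case False
  then have "card (Aut (qry K A)) > 0" by (rule card_Aut_pos[OF finD])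
  then show ?thesis using card_Hom[OF finD] by (simp add: count_hom_def)
qed

end



lemma len_le_sum: "length xs \<le> (\<Sum>a\<leftarrow>xs. 1 + f a)"
  by (induct xs) auto

lemma mem_le_sum: "a \<in> set xs \<Longrightarrow> (f a :: nat) \<le> (\<Sum>a\<leftarrow>xs. 1 + f a)"
  by (induct xs) auto

lemma cq_le_ucq: "q \<in> set u \<Longrightarrow> cq_size q \<le> ucq_size u"
  unfolding ucq_size_def by (rule mem_le_sum)

lemma len_atom: "q \<in> set u \<Longrightarrow> a \<in> set (fst q) \<Longrightarrow> length (snd a) \<le> ucq_size u"
proof -
  assume q: "q \<in> set u" and a: "a \<in> set (fst q)"
  have "length (snd a) \<le> (\<Sum>a\<leftarrow>fst q. 1 + length (snd a))" using a by (rule mem_le_sum)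
  also have "\<dots> \<le> cq_size q" by (simp add: cq_size_def)
  also have "\<dots> \<le> ucq_size u" using q by (rule cq_le_ucq)
  finally show ?thesis .
qed

lemma card_UN_list: "card (\<Union>x\<in>set xs. f x) \<le> (\<Sum>x\<leftarrow>xs. card (f x))"
proof (induct xs)
  case (Cons a xs)
  have "card (\<Union>x\<in>set (a # xs). f x) = card (f a \<union> (\<Union>x\<in>set xs. f x))" by simp
  also have "\<dots> \<le> card (f a) + card (\<Union>x\<in>set xs. f x)" by (rule card_Un_le)
  also have "\<dots> \<le> card (f a) + (\<Sum>x\<leftarrow>xs. card (f x))" using Cons by simp
  finally show ?case by simp
qed simp

lemma card_qterms: "card (qterms q) \<le> cq_size q"
proof -
  have "card (TA (set (fst q))) \<le> (\<Sum>a\<leftarrow>fst q. card (set (snd a)))"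
    unfolding TA_def by (rule card_UN_list)
  also have "\<dots> \<le> (\<Sum>a\<leftarrow>fst q. 1 + length (snd a))"
    by (rule sum_list_mono) (simp add: card_length le_SucI)
  finally have 1: "card (TA (set (fst q))) \<le> (\<Sum>a\<leftarrow>fst q. 1 + length (snd a))" .
  have "card (\<Union>p\<in>set (snd q). {fst p, snd p}) \<le> (\<Sum>p\<leftarrow>snd q. card {fst p, snd p})"
    by (rule card_UN_list)
  also have "\<dots> \<le> (\<Sum>p\<leftarrow>snd q. 3)"
  proof (rule sum_list_mono)
    fix p :: "('a,'b) trm \<times> ('a,'b) trm"
    have "card {fst p, snd p} \<le> 2" by (simp add: card_insert_if)
    then show "card {fst p, snd p} \<le> 3" by simp
  qed
  also have "\<dots> = 3 * length (snd q)" by (simp add: sum_list_triv)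
  finally have 2: "card (\<Union>p\<in>set (snd q). {fst p, snd p}) \<le> 3 * length (snd q)" .
  have "card (qterms q) \<le> card (TA (set (fst q))) + card (\<Union>p\<in>set (snd q). {fst p, snd p})"
    unfolding qterms_def by (rule card_Un_le)
  then show ?thesis using 1 2 unfolding cq_size_def by linarith
qed

lemma card_uterms: "card (uterms u) \<le> ucq_size u"
proof -
  have "card (uterms u) \<le> (\<Sum>q\<leftarrow>u. card (qterms q))" unfolding uterms_def by (rule card_UN_list)
  also have "\<dots> \<le> (\<Sum>q\<leftarrow>u. 1 + cq_size q)" by (rule sum_list_mono) (simp add: card_qterms le_SucI)
  finally show ?thesis by (simp add: ucq_size_def)
qed

lemma finite_qterms: "finite (qterms q)"
  by (auto simp: qterms_def TA_def)

lemma finite_uterms: "finite (uterms u)"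
  by (simp add: uterms_def finite_qterms)

lemma finite_uK: "finite (uK u)"
proof -
  have "uK u = Const -` uterms u" by (auto simp: uK_def)
  moreover have "inj Const" by (simp add: inj_def)
  ultimately show ?thesis using finite_vimageI[OF finite_uterms] by simp
qed

lemma card_vimage_le:
  assumes "finite T" "inj f" shows "card (f -` T) \<le> card T"
proof -
  have "card (f -` T) = card (f ` (f -` T))" by (rule card_image[symmetric]) (rule inj_on_subset[OF assms(2) subset_UNIV])
  also have "\<dots> \<le> card T" by (rule card_mono[OF assms(1)]) auto
  finally show ?thesis .
qed

lemma card_uK: "card (uK u) \<le> ucq_size u"
proof -
  have "uK u = Const -` uterms u" by (auto simp: uK_def)
  moreover have "inj Const" by (simp add: inj_def)
  ultimately have "card (uK u) \<le> card (uterms u)" using card_vimage_le[OF finite_uterms] by simp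
  then show ?thesis using card_uterms order_trans by blast
qed

lemma card_uX: "card (uX u) \<le> ucq_size u" and finite_uX: "finite (uX u)"
proof -
  have e: "uX u = Var -` uterms u" by (auto simp: uX_def)
  have iV: "inj Var" by (simp add: inj_def)
  have "card (uX u) \<le> card (uterms u)" using card_vimage_le[OF finite_uterms iV] e by simp
  then show "card (uX u) \<le> ucq_size u" using card_uterms order_trans by blast
  show "finite (uX u)" using e finite_vimageI[OF finite_uterms iV] by simp
qed

lemma finite_uR: "finite (uR u)"
  by (simp add: uR_def)

lemma finite_uF: "finite (uF u)"
proof -
  have "uF u \<subseteq> uR u \<times> {ts. set ts \<subseteq> uterms u \<and> length ts \<le> ucq_size u}"
    by (auto simp: uF_def)
  moreover have "finite (uR u \<times> {ts. set ts \<subseteq> uterms u \<and> length ts \<le> ucq_size u})"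
    using finite_uR finite_lists_length_le[OF finite_uterms] by blast
  ultimately show ?thesis by (rule finite_subset)
qed



definition uG :: "('r, 'v, 'c) ucqneq \<Rightarrow> nat \<Rightarrow> ('r \<times> ('v,'c) trm list) set set" where
  "uG u k = {A. A \<subseteq> uF u \<and> card A \<le> ucq_size u \<and> (\<exists>S\<in>Inst (uK u) A. Mn u k S)}"

definition rep :: "('r, 'v, 'c) ucqneq \<Rightarrow> nat \<Rightarrow> ('r \<times> ('v,'c) trm list) set \<Rightarrow> ('r \<times> ('v,'c) trm list) set" where
  "rep u k A = (SOME A'. A' \<in> uG u k \<and> Inst (uK u) A' = Inst (uK u) A)"

lemma rep_in:
  assumes "A \<in> uG u k" shows "rep u k A \<in> uG u k \<and> Inst (uK u) (rep u k A) = Inst (uK u) A"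
  unfolding rep_def by (rule someI[of _ A]) (simp add: assms)

lemma G_fin: "A \<in> uG u k \<Longrightarrow> finite A"
  using finite_uF by (auto simp: uG_def intro: finite_subset)

lemma G_wf: "A \<in> uG u k \<Longrightarrow> TA A \<subseteq> Var ` avars A \<union> Const ` uK u"
  by (rule TA_F) (simp add: uG_def)

lemma construct:
  assumes "Mn u k S" shows "\<exists>A\<in>uG u k. S \<in> Inst (uK u) A"
proof -
  let ?K = "uK u"
  have M: "models S u" "\<And>S'. S' \<subset> S \<Longrightarrow> \<not> models S' u" using assms by (auto simp: Mn_def)
  obtain q h where q: "q \<in> set u" "is_hom q S h" using M(1) by (auto simp: models_def)
  let ?Aq = "set (fst q)"
  let ?S0 = "lmap (eval_trm h) ` ?Aq"
  have sub: "?S0 \<subseteq> S"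
  proof
    fix b assume "b \<in> ?S0"
    then obtain a where a: "a \<in> ?Aq" "b = lmap (eval_trm h) a" by blast
    obtain P ts where [simp]: "a = (P, ts)" by (cases a)
    show "b \<in> S" using q(2) a unfolding is_hom_def lmap_def by auto
  qed
  have "is_hom q ?S0 h"
    unfolding is_hom_def
  proof (intro conjI)
    show "\<forall>(P, ts)\<in>set (fst q). (P, map (eval_trm h) ts) \<in> ?S0"
    proof (intro ballI)
      fix a assume a: "a \<in> ?Aq"
      obtain P ts where [simp]: "a = (P, ts)" by (cases a)
      have "lmap (eval_trm h) a \<in> ?S0" using a by blast
      then show "case a of (P, ts) \<Rightarrow> (P, map (eval_trm h) ts) \<in> ?S0" by (simp add: lmap_def)
    qed
    show "\<forall>(s, t)\<in>set (snd q). eval_trm h s \<noteq> eval_trm h t" using q(2) by (simp add: is_hom_def)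
  qed
  then have "models ?S0 u" using q(1) by (auto simp: models_def)
  then have S0: "?S0 = S" using sub M(2) by blast
  let ?Vq = "avars ?Aq"
  define rp where "rp e = (SOME x. x \<in> ?Vq \<and> h x = e)" for e
  have rp: "rp (h x) \<in> ?Vq \<and> h (rp (h x)) = h x" if "x \<in> ?Vq" for x
    unfolding rp_def by (rule someI[of _ x]) (simp add: that)
  define g where "g x = (if h x \<in> ?K then Const (h x) else Var (rp (h x)))" for x
  let ?A0 = "lmap (subst_trm g) ` ?Aq"
  have tq: "t \<in> uterms u" if "t \<in> TA ?Aq" for t
    using that q(1) by (auto simp: uterms_def qterms_def)
  have ev: "lmap (eval_trm h) (lmap (subst_trm g) a) = lmap (eval_trm h) a" if a: "a \<in> ?Aq" for a
  proof -
    have "(eval_trm h \<circ> subst_trm g) t = eval_trm h t" if t: "t \<in> set (snd a)" for t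
    proof (cases t)
      case (Var x)
      then have "x \<in> ?Vq" using a t by (auto simp: avars_def TA_def)
      then show ?thesis using Var rp by (simp add: g_def)
    qed simp
    then have "lmap (eval_trm h \<circ> subst_trm g) a = lmap (eval_trm h) a" by (rule lmap_cong)
    then show ?thesis by (simp only: lmap_comp)
  qed
  have inst: "lmap (eval_trm h) ` ?A0 = S"
  proof -
    have "lmap (eval_trm h) ` ?A0 = ?S0"
      unfolding image_image by (rule image_cong[OF refl ev])
    then show ?thesis using S0 by simp
  qed
  have av: "\<exists>x\<in>?Vq. h x \<notin> ?K \<and> y = rp (h x)" if y: "y \<in> avars ?A0" for y
  proof -
    have "Var y \<in> TA ?A0" using y by (simp add: avars_def)
    then obtain t where t: "t \<in> TA ?Aq" "Var y = subst_trm g t" unfolding TA_lmap by blast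
    show ?thesis
    proof (cases t)
      case (Var x)
      then have "x \<in> ?Vq" using t by (simp add: avars_def)
      moreover have "h x \<notin> ?K \<and> y = rp (h x)" using t(2) Var by (auto simp: g_def split: if_splits)
      ultimately show ?thesis by blast
    next
      case (Const c)
      then show ?thesis using t by simp
    qed
  qed
  have good: "goodh ?K (avars ?A0) h"
    unfolding goodh_def
  proof (intro conjI)
    show "inj_on h (avars ?A0)"
    proof (rule inj_onI)
      fix y1 y2 assume y: "y1 \<in> avars ?A0" "y2 \<in> avars ?A0" "h y1 = h y2"
      obtain x1 where x1: "x1 \<in> ?Vq" "y1 = rp (h x1)" using av[OF y(1)] by blast
      obtain x2 where x2: "x2 \<in> ?Vq" "y2 = rp (h x2)" using av[OF y(2)] by blast
      have "h x1 = h x2" using y(3) x1 x2 rp by metis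
      then show "y1 = y2" using x1 x2 by simp
    qed
    show "h ` avars ?A0 \<inter> ?K = {}"
    proof -
      have "h y \<notin> ?K" if y: "y \<in> avars ?A0" for y
      proof -
        obtain x where x: "x \<in> ?Vq" "h x \<notin> ?K" "y = rp (h x)" using av[OF y] by blast
        then show ?thesis using rp by metis
      qed
      then show ?thesis by blast
    qed
  qed
  have inF: "?A0 \<subseteq> uF u"
  proof
    fix b assume "b \<in> ?A0"
    then obtain a where a: "a \<in> ?Aq" "b = lmap (subst_trm g) a" by blast
    have 1: "fst b \<in> uR u" using a q(1) by (force simp: uR_def lmap_def)
    have 2: "length (snd b) \<le> ucq_size u" using a len_atom[OF q(1)] by (simp add: lmap_def)
    have 3: "set (snd b) \<subseteq> uterms u"
    proof
      fix t assume "t \<in> set (snd b)"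
      then obtain s where s: "s \<in> set (snd a)" "t = subst_trm g s" using a by (auto simp: lmap_def)
      have sT: "s \<in> TA ?Aq" using s a unfolding TA_def by blast
      show "t \<in> uterms u"
      proof (cases s)
        case (Var x)
        then have x: "x \<in> ?Vq" using sT by (simp add: avars_def)
        show ?thesis
        proof (cases "h x \<in> ?K")
          case True
          then show ?thesis using s Var by (simp add: g_def uK_def)
        next
          case False
          have "Var (rp (h x)) \<in> TA ?Aq" using rp[OF x] by (simp add: avars_def)
          then show ?thesis using s Var False tq by (simp add: g_def)
        qed
      next
        case (Const c)
        then show ?thesis using s sT tq by simp
      qed
    qed
    show "b \<in> uF u" using 1 2 3 by (simp add: uF_def)
  qed
  have "card ?A0 \<le> card ?Aq" by (rule card_image_le) simp
  also have "\<dots> \<le> length (fst q)" by (rule card_length)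
  also have "\<dots> \<le> cq_size q" unfolding cq_size_def using len_le_sum[of "fst q" "\<lambda>a. length (snd a)"] by linarith
  also have "\<dots> \<le> ucq_size u" by (rule cq_le_ucq[OF q(1)])
  finally have cA: "card ?A0 \<le> ucq_size u" .
  have SI: "S \<in> Inst ?K ?A0" using inst good unfolding Inst_def by blast
  have "?A0 \<in> uG u k" using inF cA SI assms unfolding uG_def by blast
  then show ?thesis using SI by blast
qed



lemma len_ineqs:
  fixes K :: "'c set" and V :: "'v set"
  shows "length (ineqs K V) \<le> length (lst V) * length (lst V) + length (lst V) * length (lst K)"
proof -
  let ?xs = "map (\<lambda>p. (Var (fst p), Var (snd p))) (List.product (lst V) (lst V)) :: (('v,'c) trm \<times> ('v,'c) trm) list"
  have "length (filter (\<lambda>p. fst p \<noteq> snd p) ?xs) \<le> length ?xs" by (rule length_filter_le)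
  then show ?thesis unfolding ineqs_def by simp
qed

lemma size_qry:
  assumes A: "A \<in> uG u k"
  shows "cq_size (qry (uK u) A) \<le> 8 * (ucq_size u)^2"
proof -
  let ?s = "ucq_size u" and ?K = "uK u" and ?V = "avars A"
  have finA: "finite A" by (rule G_fin[OF A])
  have AF: "A \<subseteq> uF u" and cA: "card A \<le> ?s" using A by (auto simp: uG_def)
  have finV: "finite ?V" by (rule finite_avars[OF finA])
  have VX: "?V \<subseteq> uX u"
  proof
    fix x assume "x \<in> ?V"
    then have "Var x \<in> TA A" by (simp add: avars_def)
    then have "Var x \<in> uterms u" using AF by (auto simp: TA_def uF_def)
    then show "x \<in> uX u" by (simp add: uX_def)
  qed
  have cV: "card ?V \<le> ?s" using card_mono[OF finite_uX VX] card_uX[of u] by linarith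
  have cK: "card ?K \<le> ?s" by (rule card_uK)
  have l1: "(\<Sum>a\<leftarrow>lst A. 1 + length (snd a)) \<le> card A * (1 + ?s)"
  proof -
    have "(\<Sum>a\<leftarrow>lst A. 1 + length (snd a)) = (\<Sum>a\<in>A. 1 + length (snd a))"
      using lst[OF finA] sum_list_distinct_conv_sum_set[of "lst A" "\<lambda>a. 1 + length (snd a)"] by simp
    also have "\<dots> \<le> card A * (1 + ?s)"
    proof -
      have "1 + length (snd a) \<le> 1 + ?s" if "a \<in> A" for a
      proof -
        have "a \<in> uF u" using AF that by blast
        then show ?thesis by (simp add: uF_def)
      qed
      then show ?thesis using sum_bounded_above[of A "\<lambda>a. 1 + length (snd a)" "1 + ?s"] by simp
    qed
    finally show ?thesis .
  qed
  have l2: "length (ineqs ?K ?V) \<le> card ?V * card ?V + card ?V * card ?K"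
  proof -
    have lV: "length (lst ?V) = card ?V" using lst[OF finV] distinct_card by metis
    have lK: "length (lst ?K) = card ?K" using lst[OF finite_uK] distinct_card by metis
    have "length (ineqs ?K ?V) \<le> length (lst ?V) * length (lst ?V) + length (lst ?V) * length (lst ?K)"
      by (rule len_ineqs)
    then show ?thesis using lV lK by simp
  qed
  have "cq_size (qry ?K A) = (\<Sum>a\<leftarrow>lst A. 1 + length (snd a)) + 3 * length (ineqs ?K ?V)"
    by (simp add: cq_size_def qry_def)
  also have "\<dots> \<le> card A * (1 + ?s) + 3 * (card ?V * card ?V + card ?V * card ?K)"
    using l1 l2 by (intro add_mono) auto
  also have "\<dots> \<le> ?s * (1 + ?s) + 3 * (?s * ?s + ?s * ?s)"
    using cA cV cK by (intro add_mono mult_mono mult_le_mono) auto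
  also have "\<dots> \<le> 8 * ?s^2" using le_square[of ?s] by (simp add: power2_eq_square algebra_simps)
  finally show ?thesis .
qed

definition RR where "RR u k = rep u k ` uG u k"

lemma RR_G: "A \<in> RR u k \<Longrightarrow> A \<in> uG u k"
  unfolding RR_def using rep_in by blast

lemma finite_G: "finite (uG u k)"
proof -
  have "uG u k \<subseteq> Pow (uF u)" by (auto simp: uG_def)
  then show ?thesis using finite_uF by (rule finite_subset[OF _ finite_Pow_iff[THEN iffD2]])
qed

lemma finite_RR: "finite (RR u k)"
  unfolding RR_def by (rule finite_imageI[OF finite_G])

lemma inj_qry: "inj_on (qry (uK u)) (RR u k)"
proof (rule inj_onI)
  fix A B assume A: "A \<in> RR u k" and B: "B \<in> RR u k" and e: "qry (uK u) A = qry (uK u) B"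
  have "lst A = lst B" using e by (simp add: qry_def)
  then show "A = B" using lst[OF G_fin[OF RR_G[OF A]]] lst[OF G_fin[OF RR_G[OF B]]] by metis
qed

theorem main_count:
  assumes finD: "finite D"
  shows "(of_nat (count_FMS u k D) :: rat) =
     (\<Sum>q \<in> qry (uK u) ` RR u k. of_nat (count_hom q D) * (1 / of_nat (card (Aut q))))"
proof -
  let ?K = "uK u"
  let ?C = "\<lambda>A. {S. S \<subseteq> D \<and> S \<in> Inst ?K A}"
  have "(\<Sum>q \<in> qry ?K ` RR u k. of_nat (count_hom q D) * (1 / of_nat (card (Aut q))) :: rat)
      = (\<Sum>A \<in> RR u k. of_nat (count_hom (qry ?K A) D) * (1 / of_nat (card (Aut (qry ?K A)))))"
    by (simp add: sum.reindex[OF inj_qry])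
  also have "\<dots> = (\<Sum>A \<in> RR u k. of_nat (card (?C A)))"
  proof (rule sum.cong[OF refl])
    fix A assume "A \<in> RR u k"
    then have A: "A \<in> uG u k" by (rule RR_G)
    show "(of_nat (count_hom (qry ?K A) D) :: rat) * (1 / of_nat (card (Aut (qry ?K A)))) = of_nat (card (?C A))"
      by (rule rat_eq[OF G_fin[OF A] finite_uK G_wf[OF A] finD])
  qed
  also have "\<dots> = of_nat (\<Sum>A \<in> RR u k. card (?C A))" by simp
  also have "(\<Sum>A \<in> RR u k. card (?C A)) = card (\<Union>A\<in>RR u k. ?C A)"
  proof (rule card_UN_disjoint[symmetric])
    show "finite (RR u k)" by (rule finite_RR)
    show "\<forall>A\<in>RR u k. finite (?C A)"
    proof
      fix A show "finite (?C A)" by (rule finite_subset[of _ "Pow D"]) (auto simp: finD)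
    qed
    show "\<forall>A\<in>RR u k. \<forall>B\<in>RR u k. A \<noteq> B \<longrightarrow> ?C A \<inter> ?C B = {}"
    proof (intro ballI impI)
      fix A B assume A: "A \<in> RR u k" and B: "B \<in> RR u k" and ne: "A \<noteq> B"
      show "?C A \<inter> ?C B = {}"
      proof (rule ccontr)
        assume "?C A \<inter> ?C B \<noteq> {}"
        then obtain S where S: "S \<in> Inst ?K A" "S \<in> Inst ?K B" by blast
        obtain A1 where A1: "A1 \<in> uG u k" "A = rep u k A1" using A unfolding RR_def by blast
        obtain B1 where B1: "B1 \<in> uG u k" "B = rep u k B1" using B unfolding RR_def by blast
        have AG: "A \<in> uG u k" and BG: "B \<in> uG u k" using A B by (auto intro: RR_G)
        have AF: "A \<subseteq> uF u" and BF: "B \<subseteq> uF u" using AG BG by (auto simp: uG_def)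
        have "Inst ?K A \<subseteq> Inst ?K B" by (rule Inst_overlap[OF AF G_fin[OF AG] BF S])
        moreover have "Inst ?K B \<subseteq> Inst ?K A" by (rule Inst_overlap[OF BF G_fin[OF BG] AF S(2) S(1)])
        ultimately have "Inst ?K A = Inst ?K B" by blast
        then have "Inst ?K A1 = Inst ?K B1" using rep_in[OF A1(1)] rep_in[OF B1(1)] A1(2) B1(2) by simp
        then have "rep u k A1 = rep u k B1" unfolding rep_def by simp
        then show False using ne A1(2) B1(2) by simp
      qed
    qed
  qed
  also have "(\<Union>A\<in>RR u k. ?C A) = {S. S \<subseteq> D \<and> Mn u k S}"
  proof
    show "(\<Union>A\<in>RR u k. ?C A) \<subseteq> {S. S \<subseteq> D \<and> Mn u k S}"
    proof
      fix S assume "S \<in> (\<Union>A\<in>RR u k. ?C A)"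
      then obtain A where A: "A \<in> RR u k" "S \<subseteq> D" "S \<in> Inst ?K A" by blast
      have AG: "A \<in> uG u k" by (rule RR_G[OF A(1)])
      then obtain S0 where S0: "S0 \<in> Inst ?K A" "Mn u k S0" by (auto simp: uG_def)
      have "Mn u k S" by (rule Inst_Mn[OF _ G_fin[OF AG] S0 A(3)]) (use AG in \<open>simp add: uG_def\<close>)
      then show "S \<in> {S. S \<subseteq> D \<and> Mn u k S}" using A(2) by simp
    qed
  next
    show "{S. S \<subseteq> D \<and> Mn u k S} \<subseteq> (\<Union>A\<in>RR u k. ?C A)"
    proof
      fix S assume "S \<in> {S. S \<subseteq> D \<and> Mn u k S}"
      then have S: "S \<subseteq> D" "Mn u k S" by auto
      obtain A0 where A0: "A0 \<in> uG u k" "S \<in> Inst ?K A0" using construct[OF S(2)] by blast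
      have "rep u k A0 \<in> RR u k" using A0(1) unfolding RR_def by blast
      moreover have "S \<in> Inst ?K (rep u k A0)" using rep_in[OF A0(1)] A0(2) by simp
      ultimately show "S \<in> (\<Union>A\<in>RR u k. ?C A)" using S(1) by blast
    qed
  qed
  also have "{S. S \<subseteq> D \<and> Mn u k S} = {S. min_support u D S \<and> card S = k}"
    by (auto simp: Mn_def min_support_def)
  finally show ?thesis unfolding count_FMS_def by simp
qed

theorem theorem2:
  "\<exists>c::nat. \<forall>(u :: ('r, 'v, 'c) ucqneq) (k::nat).
     \<exists>Q :: ('r, 'v, 'c) cqneq set.
       finite Q \<and>
       (\<forall>q \<in> Q. safe_cq q \<and> cq_size q \<le> c * (ucq_size u)^2) \<and>
       (\<forall>D :: ('r, 'c) database. finite D \<longrightarrow>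
          (of_nat (count_FMS u k D) :: rat) =
            (\<Sum>q \<in> Q. of_nat (count_hom q D) * (1 / of_nat (card (Aut q)))))"
proof (intro exI[of _ 8] allI)
  fix u :: "('r, 'v, 'c) ucqneq" and k :: nat
  show "\<exists>Q :: ('r, 'v, 'c) cqneq set.
       finite Q \<and>
       (\<forall>q \<in> Q. safe_cq q \<and> cq_size q \<le> 8 * (ucq_size u)^2) \<and>
       (\<forall>D :: ('r, 'c) database. finite D \<longrightarrow>
          (of_nat (count_FMS u k D) :: rat) =
            (\<Sum>q \<in> Q. of_nat (count_hom q D) * (1 / of_nat (card (Aut q)))))"
  proof (intro exI[of _ "qry (uK u) ` RR u k"] conjI ballI allI impI)
    show "finite (qry (uK u) ` RR u k)" by (rule finite_imageI[OF finite_RR])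
  next
    fix q assume "q \<in> qry (uK u) ` RR u k"
    then obtain A where A: "A \<in> RR u k" "q = qry (uK u) A" by blast
    have AG: "A \<in> uG u k" by (rule RR_G[OF A(1)])
    show "safe_cq q" using safe_qry[OF G_fin[OF AG] finite_uK] A(2) by simp
    show "cq_size q \<le> 8 * (ucq_size u)^2" using size_qry[OF AG] A(2) by simp
  next
    fix D :: "('r, 'c) database" assume "finite D"
    then show "(of_nat (count_FMS u k D) :: rat) =
            (\<Sum>q \<in> qry (uK u) ` RR u k. of_nat (count_hom q D) * (1 / of_nat (card (Aut q))))"
      by (rule main_count)
  qed
qed


end
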